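(* Let $N\ge1$, let $\mathbf{K}\in\mathbb{R}^{N\times N}$ be the cyclic shift matrix ($(\mathbf{K}\mathbf{x})_1=x_N$, $(\mathbf{K}\mathbf{x})_i=x_{i-1}$ for $i\ge2$), $\mathbf{K}(\nu)=(1-\nu)\mathbf{I}+\nu\mathbf{K}$, $\mathbf{L}_h=N^2(\mathbf{K}+\mathbf{K}^T-2\mathbf{I})$, and for $\tilde\nu\in\mathbb{R}$ let $\mathcal{K}(\tilde\nu)=\mathbf{K}^{\lfloor\tilde\nu\rfloor}\mathbf{K}(\tilde\nu-\lfloor\tilde\nu\rfloor)$ (with $\mathbf{K}^{-1}=\mathbf{K}^T$). Let $\mathbf{A}\in\mathbb{R}^{N\times M}$ with columns $\mathbf{a}_1,\dots,\mathbf{a}_M$, let $\mathbf{b}\in\mathbb{R}^N$ (the pivot), let $\tilde\nu_j\in\operatorname{argmin}_{\tilde\omega\ge0}\|\mathbf{a}_j-\mathcal{K}(\tilde\omega)^T\mathbf{b}\|_2^2$ for $j=1,\dots,M$, and let $\mathring{\mathbf{A}}$ be the matrix whose $j$-th column is $\mathcal{K}(-\tilde\nu_j)\mathbf{a}_j$. If $\varphi$ is an eigenvector of $\mathring{\mathbf{A}}^T\mathring{\mathbf{A}}$ with eigenvalue $\lambda$, then for every $\tilde\nu\in\mathbb{R}$, $\varphi$ is also an eigenvector of $(\mathcal{K}(\tilde\nu)\mathring{\mathbf{A}})^T(\mathcal{K}(\tilde\nu)\mathring{\mathbf{A}})$ with the same eigenvalue $\lambda$, up to $\mathcal{O}(1/N^2)$;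 that is, $(\mathcal{K}(\tilde\nu)\mathring{\mathbf{A}})^T(\mathcal{K}(\tilde\nu)\mathring{\mathbf{A}})\varphi=\lambda\varphi+\frac{1}{N^2}\mathring{\mathbf{A}}^T\mathbf{C}\mathring{\mathbf{A}}\varphi$ where $\mathbf{C}$ is a scalar multiple of $\mathbf{L}_h$.
   Context: Convention: a matrix term $\frac1{N^2}\mathbf{C}$ with $\mathbf{C}$ a multiple of the discrete Laplacian $\mathbf{L}_h$ is regarded as $\mathcal{O}(1/N^2)$ (it is of that size when acting on grid discretizations of twice differentiable functions). *)

theory Defs
  imports Complex_Main "Jordan_Normal_Form.Char_Poly"
begin

text \<open>Matrices are Jordan_Normal_Form matrices; indices are 0-based, so
  row/column i of the paper is index i-1 here.\<close>

text \<open>Cyclic shift K: (K x)_0 = x_(N-1), (K x)_i = x_(i-1).\<close>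
definition shift_mat :: "nat \<Rightarrow> real mat" where
  "shift_mat N = mat N N (\<lambda>(i,j). if i = (j + 1) mod N then 1 else 0)"

definition shift_nu :: "nat \<Rightarrow> real \<Rightarrow> real mat" where
  "shift_nu N \<nu> = (1 - \<nu>) \<cdot>\<^sub>m 1\<^sub>m N + \<nu> \<cdot>\<^sub>m shift_mat N"

definition lap_h :: "nat \<Rightarrow> real mat" where
  "lap_h N = (real N)^2 \<cdot>\<^sub>m (shift_mat N + transpose_mat (shift_mat N) - 2 \<cdot>\<^sub>m 1\<^sub>m N)"

definition shift_ipow :: "nat \<Rightarrow> int \<Rightarrow> real mat" where
  "shift_ipow N k = (if k \<ge> 0 then shift_mat N ^\<^sub>m nat k
                     else transpose_mat (shift_mat N) ^\<^sub>m nat (- k))"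

definition shift_gen :: "nat \<Rightarrow> real \<Rightarrow> real mat" where
  "shift_gen N \<nu> = shift_ipow N \<lfloor>\<nu>\<rfloor> * shift_nu N (\<nu> - of_int \<lfloor>\<nu>\<rfloor>)"

definition sq_norm2 :: "real vec \<Rightarrow> real" where
  "sq_norm2 v = (\<Sum>i<dim_vec v. (v $ i)^2)"

definition aligned_mat :: "nat \<Rightarrow> nat \<Rightarrow> real mat \<Rightarrow> (nat \<Rightarrow> real) \<Rightarrow> real mat" where
  "aligned_mat N M A nu = mat N M (\<lambda>(i,j). (shift_gen N (- nu j) *\<^sub>v col A j) $ i)"

end

theory Submission imports Defs begin

lemma tmm: assumes A: "A \<in> carrier_mat n n" and P: "P \<in> carrier_mat n m"
  shows "transpose_mat (A * P) * (A * P) = transpose_mat P * (transpose_mat A * (A::real mat)) * P"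
proof -
  have AT: "transpose_mat A \<in> carrier_mat n n" and PT: "transpose_mat P \<in> carrier_mat m n"
    using A P by (simp_all only: transpose_carrier_mat)
  have "transpose_mat (A * P) * (A * P) = (transpose_mat P * transpose_mat A) * (A * P)"
    by (simp only: transpose_mult[OF A P])
  also have "\<dots> = transpose_mat P * (transpose_mat A * (A * P))"
    by (rule assoc_mult_mat[OF PT AT mult_carrier_mat[OF A P]])
  also have "transpose_mat A * (A * P) = (transpose_mat A * A) * P"
    by (rule assoc_mult_mat[OF AT A P, symmetric])
  also have "transpose_mat P * ((transpose_mat A * A) * P) = transpose_mat P * (transpose_mat A * A) * P"
    by (rule assoc_mult_mat[OF PT mult_carrier_mat[OF AT A] P, symmetric])
  finally show ?thesis .
qed

lemma orth_mult: assumes Q: "Q \<in> carrier_mat n n" and P: "P \<in> carrier_mat n n"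
  and q: "transpose_mat Q * Q = 1\<^sub>m n" and p: "transpose_mat P * (P::real mat) = 1\<^sub>m n"
  shows "transpose_mat (Q * P) * (Q * P) = 1\<^sub>m n"
proof -
  have "transpose_mat (Q * P) * (Q * P) = transpose_mat P * (transpose_mat Q * Q) * P"
    by (rule tmm[OF Q P])
  also have "\<dots> = 1\<^sub>m n" using q p P by simp
  finally show ?thesis .
qed

lemma orth_pow: assumes P: "P \<in> carrier_mat n n"
  and p: "transpose_mat P * (P::real mat) = 1\<^sub>m n"
  shows "transpose_mat (P ^\<^sub>m k) * (P ^\<^sub>m k) = 1\<^sub>m n"
proof (induction k)
  case 0 then show ?case using P by simp
next
  case (Suc k) then show ?case using orth_mult[OF pow_carrier_mat[OF P] P _ p] by simp
qed

lemma smult_smult_mult: assumes "A \<in> carrier_mat nr n" "B \<in> carrier_mat n nc"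
  shows "(a \<cdot>\<^sub>m A) * (b \<cdot>\<^sub>m B) = ((a::real) * b) \<cdot>\<^sub>m (A * B)"
  using assms by (intro eq_matI) (auto simp: scalar_prod_def sum_distrib_left ac_simps)

lemma nu_lemma: assumes K: "K \<in> carrier_mat n n"
  and k: "transpose_mat K * (K::real mat) = 1\<^sub>m n"
  shows "transpose_mat ((1 - t) \<cdot>\<^sub>m 1\<^sub>m n + t \<cdot>\<^sub>m K) * ((1 - t) \<cdot>\<^sub>m 1\<^sub>m n + t \<cdot>\<^sub>m K)
    = 1\<^sub>m n + (t*(1-t)) \<cdot>\<^sub>m (K + transpose_mat K - 2 \<cdot>\<^sub>m 1\<^sub>m n)"
proof -
  have KT: "transpose_mat K \<in> carrier_mat n n" using K by simp
  have I: "1\<^sub>m n \<in> carrier_mat n n" by (rule one_carrier_mat)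
  define a where "a = 1 - t"
  have aI: "a \<cdot>\<^sub>m 1\<^sub>m n \<in> carrier_mat n n" by (rule smult_carrier_mat[OF I])
  have tK: "t \<cdot>\<^sub>m K \<in> carrier_mat n n" by (rule smult_carrier_mat[OF K])
  have tKT: "t \<cdot>\<^sub>m transpose_mat K \<in> carrier_mat n n" by (rule smult_carrier_mat[OF KT])
  have "transpose_mat (a \<cdot>\<^sub>m 1\<^sub>m n + t \<cdot>\<^sub>m K) = a \<cdot>\<^sub>m 1\<^sub>m n + t \<cdot>\<^sub>m transpose_mat K"
    using K by (intro eq_matI) auto
  hence "transpose_mat (a \<cdot>\<^sub>m 1\<^sub>m n + t \<cdot>\<^sub>m K) * (a \<cdot>\<^sub>m 1\<^sub>m n + t \<cdot>\<^sub>m K)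
    = (a \<cdot>\<^sub>m 1\<^sub>m n + t \<cdot>\<^sub>m transpose_mat K) * (a \<cdot>\<^sub>m 1\<^sub>m n + t \<cdot>\<^sub>m K)" by (rule arg_cong)
  also have "\<dots> = (a \<cdot>\<^sub>m 1\<^sub>m n) * (a \<cdot>\<^sub>m 1\<^sub>m n + t \<cdot>\<^sub>m K) + (t \<cdot>\<^sub>m transpose_mat K) * (a \<cdot>\<^sub>m 1\<^sub>m n + t \<cdot>\<^sub>m K)"
    by (rule add_mult_distrib_mat[OF aI tKT add_carrier_mat[OF tK]])
  also have "(a \<cdot>\<^sub>m 1\<^sub>m n) * (a \<cdot>\<^sub>m 1\<^sub>m n + t \<cdot>\<^sub>m K) = (a \<cdot>\<^sub>m 1\<^sub>m n) * (a \<cdot>\<^sub>m 1\<^sub>m n) + (a \<cdot>\<^sub>m 1\<^sub>m n) * (t \<cdot>\<^sub>m K)"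
    by (rule mult_add_distrib_mat[OF aI aI tK])
  also have "(t \<cdot>\<^sub>m transpose_mat K) * (a \<cdot>\<^sub>m 1\<^sub>m n + t \<cdot>\<^sub>m K) = (t \<cdot>\<^sub>m transpose_mat K) * (a \<cdot>\<^sub>m 1\<^sub>m n) + (t \<cdot>\<^sub>m transpose_mat K) * (t \<cdot>\<^sub>m K)"
    by (rule mult_add_distrib_mat[OF tKT aI tK])
  also have "(a \<cdot>\<^sub>m 1\<^sub>m n) * (a \<cdot>\<^sub>m 1\<^sub>m n) = (a*a) \<cdot>\<^sub>m 1\<^sub>m n"
    using smult_smult_mult[OF I I, of a a] by simp
  also have "(a \<cdot>\<^sub>m 1\<^sub>m n) * (t \<cdot>\<^sub>m K) = (a*t) \<cdot>\<^sub>m K"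
    using smult_smult_mult[OF I K, of a t] K by simp
  also have "(t \<cdot>\<^sub>m transpose_mat K) * (a \<cdot>\<^sub>m 1\<^sub>m n) = (t*a) \<cdot>\<^sub>m transpose_mat K"
    using smult_smult_mult[OF KT I, of t a] KT by simp
  also have "(t \<cdot>\<^sub>m transpose_mat K) * (t \<cdot>\<^sub>m K) = (t*t) \<cdot>\<^sub>m 1\<^sub>m n"
    using smult_smult_mult[OF KT K, of t t] k by simp
  also have "(a*a) \<cdot>\<^sub>m 1\<^sub>m n + (a*t) \<cdot>\<^sub>m K + ((t*a) \<cdot>\<^sub>m transpose_mat K + (t*t) \<cdot>\<^sub>m 1\<^sub>m n)
      = 1\<^sub>m n + (t*(1-t)) \<cdot>\<^sub>m (K + transpose_mat K - 2 \<cdot>\<^sub>m 1\<^sub>m n)"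
  proof (rule eq_matI)
    fix i j assume "i < dim_row (1\<^sub>m n + (t*(1-t)) \<cdot>\<^sub>m (K + transpose_mat K - 2 \<cdot>\<^sub>m 1\<^sub>m n))"
      "j < dim_col (1\<^sub>m n + (t*(1-t)) \<cdot>\<^sub>m (K + transpose_mat K - 2 \<cdot>\<^sub>m 1\<^sub>m n))"
    hence ij: "i < n" "j < n" using K by auto
    show "((a*a) \<cdot>\<^sub>m 1\<^sub>m n + (a*t) \<cdot>\<^sub>m K + ((t*a) \<cdot>\<^sub>m transpose_mat K + (t*t) \<cdot>\<^sub>m 1\<^sub>m n)) $$ (i,j)
      = (1\<^sub>m n + (t*(1-t)) \<cdot>\<^sub>m (K + transpose_mat K - 2 \<cdot>\<^sub>m 1\<^sub>m n)) $$ (i,j)"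
      using ij K unfolding a_def by (cases "i = j") (simp_all add: algebra_simps)
  qed (use K in auto)
  finally show ?thesis unfolding a_def .
qed

lemma shift_carrier[simp]: "shift_mat N \<in> carrier_mat N N"
  by (simp add: shift_mat_def)

lemma modeq: "i < N \<Longrightarrow> j < N \<Longrightarrow> (Suc i) mod N = (Suc j) mod N \<Longrightarrow> i = j"
  by (simp add: mod_Suc split: if_splits)

lemma shiftTK: "transpose_mat (shift_mat N) * shift_mat N = 1\<^sub>m N"
proof (rule eq_matI)
  fix i j assume ij: "i < dim_row (1\<^sub>m N)" "j < dim_col (1\<^sub>m N)"
  hence "i < N" "j < N" by auto
  have "(transpose_mat (shift_mat N) * shift_mat N) $$ (i,j)
     = (\<Sum>k<N. (if k = (i+1) mod N then 1 else 0) * (if k = (j+1) mod N then (1::real) else 0))"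
    using ij by (simp add: shift_mat_def scalar_prod_def lessThan_atLeast0)
  also have "\<dots> = (\<Sum>k<N. if k = (i+1) mod N then (if (i+1) mod N = (j+1) mod N then 1 else 0) else 0)"
    by (rule sum.cong) auto
  also have "\<dots> = (if (i+1) mod N = (j+1) mod N then 1 else 0)"
    using \<open>i<N\<close> sum.delta[of "{..<N}" "(i+1) mod N" "\<lambda>_. (if (i+1) mod N = (j+1) mod N then 1 else (0::real))"]
    by simp
  also have "\<dots> = 1\<^sub>m N $$ (i,j)"
    using \<open>i<N\<close> \<open>j<N\<close> modeq[of i N j] by auto
  finally show "(transpose_mat (shift_mat N) * shift_mat N) $$ (i,j) = 1\<^sub>m N $$ (i,j)" .
qed (auto simp: shift_mat_def)

lemma shiftKT: "shift_mat N * transpose_mat (shift_mat N) = 1\<^sub>m N"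
  by (rule mat_mult_left_right_inverse[OF _ _ shiftTK]) auto

lemma ipow_carrier: "shift_ipow N k \<in> carrier_mat N N"
  by (simp add: shift_ipow_def)

lemma ipow_orth: "transpose_mat (shift_ipow N k) * shift_ipow N k = 1\<^sub>m N"
proof (cases "k \<ge> 0")
  case True then show ?thesis
    unfolding shift_ipow_def using orth_pow[OF shift_carrier shiftTK] by simp
next
  case False
  have "transpose_mat (transpose_mat (shift_mat N)) * transpose_mat (shift_mat N) = 1\<^sub>m N"
    using shiftKT by simp
  with False show ?thesis
    unfolding shift_ipow_def using orth_pow[OF transpose_carrier_mat[THEN iffD2, OF shift_carrier]] by simp
qed

lemma gen_orth: "transpose_mat (shift_gen N v) * shift_gen N v
   = 1\<^sub>m N + ((v - of_int \<lfloor>v\<rfloor>) * (1 - (v - of_int \<lfloor>v\<rfloor>))) \<cdot>\<^sub>m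
       (shift_mat N + transpose_mat (shift_mat N) - 2 \<cdot>\<^sub>m 1\<^sub>m N)"
proof -
  define Q where "Q = shift_ipow N \<lfloor>v\<rfloor>"
  define S where "S = shift_nu N (v - of_int \<lfloor>v\<rfloor>)"
  have Q: "Q \<in> carrier_mat N N" unfolding Q_def by (rule ipow_carrier)
  have S: "S \<in> carrier_mat N N" unfolding S_def shift_nu_def by simp
  have "transpose_mat (shift_gen N v) * shift_gen N v = transpose_mat S * (transpose_mat Q * Q) * S"
    unfolding shift_gen_def Q_def[symmetric] S_def[symmetric]
    by (rule tmm[OF Q S])
  also have "\<dots> = transpose_mat S * S" using S by (simp add: Q_def ipow_orth)
  also have "\<dots> = 1\<^sub>m N + ((v - of_int \<lfloor>v\<rfloor>) * (1 - (v - of_int \<lfloor>v\<rfloor>))) \<cdot>\<^sub>m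
       (shift_mat N + transpose_mat (shift_mat N) - 2 \<cdot>\<^sub>m 1\<^sub>m N)" unfolding S_def shift_nu_def
    by (rule nu_lemma[OF shift_carrier shiftTK])
  finally show ?thesis .
qed

lemma smv: assumes "A \<in> carrier_mat nr nc" "v \<in> carrier_vec nc"
  shows "(k \<cdot>\<^sub>m A) *\<^sub>v v = (k::real) \<cdot>\<^sub>v (A *\<^sub>v v)"
  using assms by (intro eq_vecI) (auto simp: scalar_prod_def sum_distrib_left mult.assoc)

lemma smsm: "k \<cdot>\<^sub>m (l \<cdot>\<^sub>m A) = ((k::real) * l) \<cdot>\<^sub>m A"
  by (intro eq_matI) auto

lemma sandwich: assumes BT: "BT \<in> carrier_mat m n" and X: "X \<in> carrier_mat n n"
  and B: "B \<in> carrier_mat n m"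
  shows "BT * (k \<cdot>\<^sub>m X) * B = (k::real) \<cdot>\<^sub>m (BT * X * B)"
proof -
  have "BT * (k \<cdot>\<^sub>m X) = k \<cdot>\<^sub>m (BT * X)" by (rule mult_smult_distrib[OF BT X])
  hence "BT * (k \<cdot>\<^sub>m X) * B = (k \<cdot>\<^sub>m (BT * X)) * B" by (rule arg_cong)
  also have "\<dots> = k \<cdot>\<^sub>m (BT * X * B)" by (rule mult_smult_assoc_mat[OF mult_carrier_mat[OF BT X] B])
  finally show ?thesis .
qed

theorem proposition3p1:
  fixes N M :: nat and A :: "real mat" and b :: "real vec"
    and nu :: "nat \<Rightarrow> real" and \<phi> :: "real vec" and lam :: real
  assumes "N \<ge> 1"
    and "A \<in> carrier_mat N M"
    and "b \<in> carrier_vec N"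
    and "\<forall>j<M. nu j \<ge> 0 \<and>
           (\<forall>\<omega>\<ge>0. sq_norm2 (col A j - transpose_mat (shift_gen N (nu j)) *\<^sub>v b)
                   \<le> sq_norm2 (col A j - transpose_mat (shift_gen N \<omega>) *\<^sub>v b))"
    and "eigenvector (transpose_mat (aligned_mat N M A nu) * aligned_mat N M A nu) \<phi> lam"
  shows "\<forall>\<nu>::real. \<exists>c::real.
           (transpose_mat (shift_gen N \<nu> * aligned_mat N M A nu)
              * (shift_gen N \<nu> * aligned_mat N M A nu)) *\<^sub>v \<phi>
           = lam \<cdot>\<^sub>v \<phi> + (1 / (real N)^2) \<cdot>\<^sub>v
               ((transpose_mat (aligned_mat N M A nu) * (c \<cdot>\<^sub>m lap_h N) * aligned_mat N M A nu) *\<^sub>v \<phi>)"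
proof
  fix v :: real
  define B where "B = aligned_mat N M A nu"
  define G where "G = shift_gen N v"
  define t where "t = v - of_int \<lfloor>v\<rfloor>"
  define X where "X = shift_mat N + transpose_mat (shift_mat N) - 2 \<cdot>\<^sub>m 1\<^sub>m N"
  define c where "c = t * (1 - t)"
  define Z where "Z = transpose_mat B * X * B"
  have B: "B \<in> carrier_mat N M" unfolding B_def aligned_mat_def by simp
  have BT: "transpose_mat B \<in> carrier_mat M N" using B by simp
  have G: "G \<in> carrier_mat N N" unfolding G_def shift_gen_def shift_nu_def
    by (rule mult_carrier_mat[OF ipow_carrier]) simp
  have X: "X \<in> carrier_mat N N" unfolding X_def by (rule minus_carrier_mat) simp
  have cX: "c \<cdot>\<^sub>m X \<in> carrier_mat N N" using X by simp
  have BB: "transpose_mat B * B \<in> carrier_mat M M" using B BT by simp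
  have Z: "Z \<in> carrier_mat M M" unfolding Z_def using B BT X by simp
  have GG: "transpose_mat G * G = 1\<^sub>m N + c \<cdot>\<^sub>m X"
    unfolding G_def c_def t_def X_def by (rule gen_orth)
  from assms(5) have phi: "\<phi> \<in> carrier_vec M" and ev: "(transpose_mat B * B) *\<^sub>v \<phi> = lam \<cdot>\<^sub>v \<phi>"
    unfolding eigenvector_def B_def[symmetric] using B by auto
  have "transpose_mat (G * B) * (G * B) = transpose_mat B * (transpose_mat G * G) * B"
    by (rule tmm[OF G B])
  also have "\<dots> = transpose_mat B * (1\<^sub>m N + c \<cdot>\<^sub>m X) * B" unfolding GG ..
  also have "transpose_mat B * (1\<^sub>m N + c \<cdot>\<^sub>m X) = transpose_mat B * 1\<^sub>m N + transpose_mat B * (c \<cdot>\<^sub>m X)"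
    by (rule mult_add_distrib_mat[OF BT one_carrier_mat cX])
  also have "transpose_mat B * 1\<^sub>m N = transpose_mat B" by (rule right_mult_one_mat[OF BT])
  also have "(transpose_mat B + transpose_mat B * (c \<cdot>\<^sub>m X)) * B = transpose_mat B * B + transpose_mat B * (c \<cdot>\<^sub>m X) * B"
    by (rule add_mult_distrib_mat[OF BT mult_carrier_mat[OF BT cX] B])
  also have "transpose_mat B * (c \<cdot>\<^sub>m X) * B = c \<cdot>\<^sub>m Z" unfolding Z_def by (rule sandwich[OF BT X B])
  finally have e1: "transpose_mat (G * B) * (G * B) = transpose_mat B * B + c \<cdot>\<^sub>m Z" .
  have "(transpose_mat B * B + c \<cdot>\<^sub>m Z) *\<^sub>v \<phi> = (transpose_mat B * B) *\<^sub>v \<phi> + (c \<cdot>\<^sub>m Z) *\<^sub>v \<phi>"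
    by (rule add_mult_distrib_mat_vec[OF BB smult_carrier_mat[OF Z] phi])
  also have "(c \<cdot>\<^sub>m Z) *\<^sub>v \<phi> = c \<cdot>\<^sub>v (Z *\<^sub>v \<phi>)" by (rule smv[OF Z phi])
  finally have e2: "(transpose_mat B * B + c \<cdot>\<^sub>m Z) *\<^sub>v \<phi> = lam \<cdot>\<^sub>v \<phi> + c \<cdot>\<^sub>v (Z *\<^sub>v \<phi>)"
    unfolding ev .
  have NN: "(real N)^2 \<noteq> 0" using assms(1) by simp
  have L: "c \<cdot>\<^sub>m lap_h N = (c * (real N)^2) \<cdot>\<^sub>m X"
    unfolding lap_h_def X_def[symmetric] by (rule smsm)
  have "(1 / (real N)^2) \<cdot>\<^sub>v ((transpose_mat B * (c \<cdot>\<^sub>m lap_h N) * B) *\<^sub>v \<phi>)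
      = (1 / (real N)^2) \<cdot>\<^sub>v (((c * (real N)^2) \<cdot>\<^sub>m Z) *\<^sub>v \<phi>)"
    unfolding L Z_def by (simp only: sandwich[OF BT X B])
  also have "\<dots> = (1 / (real N)^2) \<cdot>\<^sub>v ((c * (real N)^2) \<cdot>\<^sub>v (Z *\<^sub>v \<phi>))"
    by (simp only: smv[OF Z phi])
  also have "\<dots> = (1 / (real N)^2 * (c * (real N)^2)) \<cdot>\<^sub>v (Z *\<^sub>v \<phi>)"
    by (rule smult_smult_assoc)
  also have "1 / (real N)^2 * (c * (real N)^2) = c" using NN by simp
  finally have e3: "(1 / (real N)^2) \<cdot>\<^sub>v ((transpose_mat B * (c \<cdot>\<^sub>m lap_h N) * B) *\<^sub>v \<phi>)
      = c \<cdot>\<^sub>v (Z *\<^sub>v \<phi>)" .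
  show "\<exists>c::real.
           (transpose_mat (shift_gen N v * aligned_mat N M A nu)
              * (shift_gen N v * aligned_mat N M A nu)) *\<^sub>v \<phi>
           = lam \<cdot>\<^sub>v \<phi> + (1 / (real N)^2) \<cdot>\<^sub>v
               ((transpose_mat (aligned_mat N M A nu) * (c \<cdot>\<^sub>m lap_h N) * aligned_mat N M A nu) *\<^sub>v \<phi>)"
    unfolding B_def[symmetric] G_def[symmetric]
    by (rule exI[of _ c]) (simp only: e1 e2 e3)
qed

end
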